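(* Let $G$ be a graph, $t\in\mathbb{N}$, and let $H$ be a connected subgraph of $G$ such that $\mathrm{tw}\big(G[N_G[H]]\cup\binom{N_G(H)}{2}\big)\le 2$. Let $G'$ be the graph obtained from $G$ by deleting $V(H)$ and adding an edge between every pair of distinct vertices of $N_G(H)$. Then $(G,t)$ has a solution if and only if $(G',t)$ has a solution.
   Context: For a graph $G$ and $t\in\mathbb{N}$, a solution for $(G,t)$ is a set $S\subseteq V(G)$ with $|S|\le t$ and $\mathrm{tw}(G-S)\le 2$ ($\mathrm{tw}$ = treewidth). $N_G(H)$ is the set of vertices outside $V(H)$ adjacent to $V(H)$, $N_G[H]=V(H)\cup N_G(H)$. For a graph $F$ and a set $E'$ of vertex pairs, $F\cup E'$ denotes $F$ with the pairs of $E'$ whose both endpoints lie in $V(F)$ added as edges. *)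

theory Defs
  imports Main
begin

definition wf_graph :: "'a set \<Rightarrow> 'a set set \<Rightarrow> bool" where
  "wf_graph V E \<longleftrightarrow> finite V \<and>
     (\<forall>e\<in>E. \<exists>u v. e = {u, v} \<and> u \<noteq> v \<and> u \<in> V \<and> v \<in> V)"

definition adj_rel :: "'a set set \<Rightarrow> ('a \<times> 'a) set" where
  "adj_rel E = {(u, v). {u, v} \<in> E}"

definition connected_graph :: "'a set \<Rightarrow> 'a set set \<Rightarrow> bool" where
  "connected_graph V E \<longleftrightarrow> V \<noteq> {} \<and>
     (\<forall>u\<in>V. \<forall>v\<in>V. (u, v) \<in> (adj_rel {e\<in>E. e \<subseteq> V})\<^sup>*)"

text \<open>A tree: a connected graph without cycles, i.e. every edge is a bridge.\<close>
definition is_tree :: "'a set \<Rightarrow> 'a set set \<Rightarrow> bool" where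
  "is_tree V E \<longleftrightarrow> wf_graph V E \<and> connected_graph V E \<and>
     (\<forall>e\<in>E. \<forall>u v. e = {u, v} \<longrightarrow> (u, v) \<notin> (adj_rel (E - {e}))\<^sup>*)"

definition induced :: "'a set set \<Rightarrow> 'a set \<Rightarrow> 'a set set" where
  "induced E S = {e\<in>E. (e::'a set) \<subseteq> S}"

definition tree_decomposition ::
  "'a set \<Rightarrow> 'a set set \<Rightarrow> nat set \<Rightarrow> nat set set \<Rightarrow> (nat \<Rightarrow> 'a set) \<Rightarrow> bool" where
  "tree_decomposition V E I F B \<longleftrightarrow>
     is_tree I F \<and>
     (\<forall>i\<in>I. B i \<subseteq> V) \<and>
     (\<forall>v\<in>V. \<exists>i\<in>I. v \<in> B i) \<and>
     (\<forall>e\<in>E. \<exists>i\<in>I. e \<subseteq> B i) \<and>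
     (\<forall>v\<in>V. connected_graph {i\<in>I. v \<in> B i} (induced F {i\<in>I. v \<in> B i}))"

definition tw_le :: "'a set \<Rightarrow> 'a set set \<Rightarrow> nat \<Rightarrow> bool" where
  "tw_le V E k \<longleftrightarrow> (\<exists>I F B. tree_decomposition V E I F B \<and> (\<forall>i\<in>I. card (B i) \<le> k + 1))"

definition del_vertices :: "'a set \<Rightarrow> 'a set set \<Rightarrow> 'a set \<Rightarrow> 'a set \<times> 'a set set" where
  "del_vertices V E S = (V - S, induced E (V - S))"

definition is_solution :: "'a set \<Rightarrow> 'a set set \<Rightarrow> nat \<Rightarrow> 'a set \<Rightarrow> bool" where
  "is_solution V E t S \<longleftrightarrow> S \<subseteq> V \<and> card S \<le> t \<and>
     tw_le (V - S) (induced E (V - S)) 2"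

definition has_solution :: "'a set \<Rightarrow> 'a set set \<Rightarrow> nat \<Rightarrow> bool" where
  "has_solution V E t \<longleftrightarrow> (\<exists>S. is_solution V E t S)"

definition nbhd :: "'a set \<Rightarrow> 'a set set \<Rightarrow> 'a set \<Rightarrow> 'a set" where
  "nbhd V E VH = {v\<in>V - VH. \<exists>u\<in>VH. {u, v} \<in> E}"

definition cl_nbhd :: "'a set \<Rightarrow> 'a set set \<Rightarrow> 'a set \<Rightarrow> 'a set" where
  "cl_nbhd V E VH = VH \<union> nbhd V E VH"

definition clique_edges :: "'a set \<Rightarrow> 'a set set" where
  "clique_edges S = {{u, v} | u v. u \<in> S \<and> v \<in> S \<and> u \<noteq> v}"

definition add_pairs :: "'a set \<Rightarrow> 'a set set \<Rightarrow> 'a set set \<Rightarrow> 'a set set" where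
  "add_pairs VF EF E' = EF \<union> {e\<in>E'. e \<subseteq> VF}"

end

theory Submission
  imports Defs
begin


lemma adj_iff[simp]: "(x,y) \<in> adj_rel E \<longleftrightarrow> {x,y} \<in> E"
  by (simp add: adj_rel_def)

lemma adj_rtr_sym: "(x,y) \<in> (adj_rel E)\<^sup>* \<Longrightarrow> (y,x) \<in> (adj_rel E)\<^sup>*"
proof (induction rule: rtrancl_induct)
  case base then show ?case by simp
next
  case (step y z)
  then have "(z,y) \<in> adj_rel E" by (simp add: insert_commute)
  then show ?case using step(3) by (meson converse_rtrancl_into_rtrancl)
qed

lemma adj_rtr_mono: "E \<subseteq> E' \<Longrightarrow> (x,y) \<in> (adj_rel E)\<^sup>* \<Longrightarrow> (x,y) \<in> (adj_rel E')\<^sup>*"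
proof -
  assume a: "E \<subseteq> E'" "(x,y) \<in> (adj_rel E)\<^sup>*"
  have "adj_rel E \<subseteq> adj_rel E'" using a(1) by (auto simp: adj_rel_def)
  then show ?thesis using a(2) rtrancl_mono by blast
qed

lemma adj_hom:
  assumes "(x,y) \<in> (adj_rel E)\<^sup>*"
    and "\<And>a b. {a,b} \<in> E \<Longrightarrow> f a = f b \<or> {f a, f b} \<in> E'"
  shows "(f x, f y) \<in> (adj_rel E')\<^sup>*"
  using assms(1)
proof (induction rule: rtrancl_induct)
  case base then show ?case by simp
next
  case (step y z)
  then have "f y = f z \<or> {f y, f z} \<in> E'" using assms(2) by simp
  then show ?case using step(3) by (metis adj_iff rtrancl.rtrancl_into_rtrancl)
qed

lemma adj_stay: "(x,y) \<in> (adj_rel (induced F Y))\<^sup>* \<Longrightarrow> x \<in> Y \<Longrightarrow> y \<in> Y"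
proof (induction rule: rtrancl_induct)
  case base then show ?case by simp
next
  case (step y z) then show ?case by (auto simp: induced_def)
qed

lemma induced_induced: "Y \<subseteq> X \<Longrightarrow> induced (induced F X) Y = induced F Y"
  by (auto simp: induced_def)

lemma induced_mono: "X \<subseteq> Y \<Longrightarrow> induced F X \<subseteq> induced F Y"
  by (auto simp: induced_def)

lemma conn_ind: "connected_graph X (induced F X) \<longleftrightarrow>
   X \<noteq> {} \<and> (\<forall>u\<in>X. \<forall>v\<in>X. (u,v) \<in> (adj_rel (induced F X))\<^sup>*)"
proof -
  have "{e\<in>induced F X. e \<subseteq> X} = induced F X" by (auto simp: induced_def)
  then show ?thesis by (simp add: connected_graph_def)
qed

lemma wf_edge: "wf_graph V E \<Longrightarrow> e \<in> E \<Longrightarrow> e \<subseteq> V"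
  by (auto simp: wf_graph_def)

lemma wf_edge2: "wf_graph V E \<Longrightarrow> {a,b} \<in> E \<Longrightarrow> a \<in> V \<and> b \<in> V"
  using wf_edge by blast

lemma wf_self: "wf_graph V E \<Longrightarrow> {e\<in>E. e \<subseteq> V} = E"
  by (auto simp: wf_graph_def)

lemma wf_ne: "wf_graph V E \<Longrightarrow> {a} \<notin> E"
  by (auto simp: wf_graph_def doubleton_eq_iff)

lemma wf_finite: "wf_graph V E \<Longrightarrow> finite E"
proof -
  assume a: "wf_graph V E"
  then have "E \<subseteq> Pow V" by (auto simp: wf_graph_def)
  moreover have "finite V" using a by (simp add: wf_graph_def)
  ultimately show ?thesis by (meson finite_Pow_iff finite_subset)
qed

lemma tree_conn: "is_tree I F \<Longrightarrow> u \<in> I \<Longrightarrow> v \<in> I \<Longrightarrow> (u,v) \<in> (adj_rel F)\<^sup>*"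
proof -
  assume a: "is_tree I F" "u \<in> I" "v \<in> I"
  then have "wf_graph I F" "connected_graph I F" by (auto simp: is_tree_def)
  then show ?thesis using a wf_self[of I F] unfolding connected_graph_def by simp
qed

lemma tree_bridge: "is_tree I F \<Longrightarrow> {u,v} \<in> F \<Longrightarrow> (u,v) \<notin> (adj_rel (F - {{u,v}}))\<^sup>*"
proof -
  assume a: "is_tree I F" "{u,v} \<in> F"
  then have "\<forall>a b. {u,v} = {a,b} \<longrightarrow> (a,b) \<notin> (adj_rel (F - {{u,v}}))\<^sup>*"
    unfolding is_tree_def by blast
  then show ?thesis by blast
qed

lemma conn_union:
  assumes "connected_graph X (induced F X)" "connected_graph Y (induced F Y)" "X \<inter> Y \<noteq> {}"
  shows "connected_graph (X \<union> Y) (induced F (X \<union> Y))"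
proof -
  let ?R = "adj_rel (induced F (X \<union> Y))"
  have mX: "\<And>a b. a \<in> X \<Longrightarrow> b \<in> X \<Longrightarrow> (a,b) \<in> ?R\<^sup>*"
    using assms(1) unfolding conn_ind by (meson adj_rtr_mono induced_mono sup_ge1)
  have mY: "\<And>a b. a \<in> Y \<Longrightarrow> b \<in> Y \<Longrightarrow> (a,b) \<in> ?R\<^sup>*"
    using assms(2) unfolding conn_ind by (meson adj_rtr_mono induced_mono sup_ge2)
  obtain z where z: "z \<in> X" "z \<in> Y" using assms(3) by blast
  have "\<And>a b. a \<in> X \<union> Y \<Longrightarrow> b \<in> X \<union> Y \<Longrightarrow> (a,b) \<in> ?R\<^sup>*"
  proof -
    fix a b assume "a \<in> X \<union> Y" "b \<in> X \<union> Y"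
    then show "(a,b) \<in> ?R\<^sup>*"
      apply (elim UnE)
      using mX mY z rtrancl_trans by metis+
  qed
  moreover have "X \<union> Y \<noteq> {}" using z by blast
  ultimately show ?thesis unfolding conn_ind by blast
qed



definition tcomp :: "nat set set \<Rightarrow> nat \<Rightarrow> nat \<Rightarrow> nat set" where
  "tcomp F u v = {w. (u,w) \<in> (adj_rel (F - {{u,v}}))\<^sup>*}"

lemma comp_sym_edge: "tcomp F v u = {w. (v,w) \<in> (adj_rel (F - {{u,v}}))\<^sup>*}"
  by (simp add: tcomp_def insert_commute)

context
  fixes I :: "nat set" and F :: "nat set set" and u v :: nat
  assumes T: "is_tree I F" and e: "{u,v} \<in> F"
begin

lemma wfT: "wf_graph I F" using T by (simp add: is_tree_def)

lemma uv_in: "u \<in> I" "v \<in> I" using wf_edge2[OF wfT e] by auto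

lemma comp_sub: "tcomp F u v \<subseteq> I"
proof
  fix w assume "w \<in> tcomp F u v"
  then have "(u,w) \<in> (adj_rel (F - {{u,v}}))\<^sup>*" by (simp add: tcomp_def)
  then show "w \<in> I"
  proof (induction rule: rtrancl_induct)
    case base then show ?case using uv_in by simp
  next
    case (step y z) then show ?case using wf_edge2[OF wfT, of y z] by auto
  qed
qed

lemma comp_u: "u \<in> tcomp F u v" by (simp add: tcomp_def)

lemma comp_v: "v \<notin> tcomp F u v" using tree_bridge[OF T e] by (simp add: tcomp_def)

lemma comp_cover: "I \<subseteq> tcomp F u v \<union> tcomp F v u"
proof
  fix w assume "w \<in> I"
  then have "(u,w) \<in> (adj_rel F)\<^sup>*" using tree_conn[OF T] uv_in by blast
  then show "w \<in> tcomp F u v \<union> tcomp F v u"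
  proof (induction rule: rtrancl_induct)
    case base then show ?case by (simp add: tcomp_def)
  next
    case (step y z)
    show ?case
    proof (cases "{y,z} = {u,v}")
      case True
      then have "z \<in> {u,v}" by blast
      moreover have "u \<in> tcomp F u v" "v \<in> tcomp F v u" by (simp_all add: tcomp_def)
      ultimately show ?thesis by blast
    next
      case False
      then have "(y,z) \<in> adj_rel (F - {{u,v}})" using step(2) by simp
      let ?R = "adj_rel (F - {{u,v}})"
      from step(3) show ?thesis
      proof
        assume "y \<in> tcomp F u v"
        then have "(u,y) \<in> ?R\<^sup>*" by (simp add: tcomp_def)
        then have "(u,z) \<in> ?R\<^sup>*" using \<open>(y,z) \<in> ?R\<close> by (rule rtrancl_into_rtrancl)
        then show ?thesis by (simp add: tcomp_def)
      next
        assume "y \<in> tcomp F v u"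
        then have "(v,y) \<in> ?R\<^sup>*" by (simp add: comp_sym_edge)
        then have "(v,z) \<in> ?R\<^sup>*" using \<open>(y,z) \<in> ?R\<close> by (rule rtrancl_into_rtrancl)
        then show ?thesis by (simp add: comp_sym_edge)
      qed
    qed
  qed
qed

lemma comp_disj: "tcomp F u v \<inter> tcomp F v u = {}"
proof (rule ccontr)
  assume "tcomp F u v \<inter> tcomp F v u \<noteq> {}"
  then obtain w where w: "w \<in> tcomp F u v" "w \<in> tcomp F v u" by blast
  have "(u,w) \<in> (adj_rel (F - {{u,v}}))\<^sup>*" using w(1) unfolding tcomp_def by simp
  moreover have "(v,w) \<in> (adj_rel (F - {{u,v}}))\<^sup>*" using w(2) unfolding comp_sym_edge by simp
  ultimately have "(u,w) \<in> (adj_rel (F - {{u,v}}))\<^sup>* \<and> (v,w) \<in> (adj_rel (F - {{u,v}}))\<^sup>*" by simp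
  then obtain w where "(u,w) \<in> (adj_rel (F - {{u,v}}))\<^sup>*" "(v,w) \<in> (adj_rel (F - {{u,v}}))\<^sup>*"
    by blast
  then have "(u,v) \<in> (adj_rel (F - {{u,v}}))\<^sup>*" using adj_rtr_sym rtrancl_trans by metis
  then show False using tree_bridge[OF T e] by simp
qed

lemma comp_path: "(u,w) \<in> (adj_rel (F - {{u,v}}))\<^sup>* \<Longrightarrow>
   (u,w) \<in> (adj_rel (induced F (tcomp F u v)))\<^sup>*"
proof (induction rule: rtrancl_induct)
  case base then show ?case by simp
next
  case (step y z)
  have "(u,z) \<in> (adj_rel (F - {{u,v}}))\<^sup>*" by (rule rtrancl_into_rtrancl[OF step(1) step(2)])
  then have "y \<in> tcomp F u v" "z \<in> tcomp F u v" using step(1) by (simp_all add: tcomp_def)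
  moreover have "{y,z} \<in> F" using step(2) by simp
  ultimately have "(y,z) \<in> adj_rel (induced F (tcomp F u v))" by (simp add: induced_def)
  then show ?case using step(3) by (meson rtrancl.rtrancl_into_rtrancl)
qed

lemma comp_tree: "is_tree (tcomp F u v) (induced F (tcomp F u v))"
proof -
  let ?C = "tcomp F u v"
  have wf: "wf_graph ?C (induced F ?C)"
    unfolding wf_graph_def
  proof (intro conjI ballI)
    have "finite I" using wfT by (simp add: wf_graph_def)
    then show "finite ?C" by (rule finite_subset[OF comp_sub])
  next
    fix e' assume h: "e' \<in> induced F ?C"
    then have e'F: "e' \<in> F" and e'C: "e' \<subseteq> ?C" by (auto simp: induced_def)
    have "\<forall>e\<in>F. \<exists>a b. e = {a,b} \<and> a \<noteq> b \<and> a \<in> I \<and> b \<in> I" using wfT by (simp add: wf_graph_def)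
    then obtain a b where "e' = {a,b}" "a \<noteq> b" using e'F by blast
    then show "\<exists>a b. e' = {a, b} \<and> a \<noteq> b \<and> a \<in> ?C \<and> b \<in> ?C" using e'C by blast
  qed
  have c: "connected_graph ?C (induced F ?C)"
    unfolding conn_ind
  proof (intro conjI ballI)
    show "?C \<noteq> {}" using comp_u by blast
  next
    fix a b assume a: "a \<in> ?C" and b: "b \<in> ?C"
    have "(u,a) \<in> (adj_rel (F - {{u,v}}))\<^sup>*" using a by (simp add: tcomp_def)
    then have 1: "(u,a) \<in> (adj_rel (induced F ?C))\<^sup>*" by (rule comp_path)
    have "(u,b) \<in> (adj_rel (F - {{u,v}}))\<^sup>*" using b by (simp add: tcomp_def)
    then have 2: "(u,b) \<in> (adj_rel (induced F ?C))\<^sup>*" by (rule comp_path)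
    have "(a,u) \<in> (adj_rel (induced F ?C))\<^sup>*" using 1 by (rule adj_rtr_sym)
    then show "(a,b) \<in> (adj_rel (induced F ?C))\<^sup>*" using 2 by (rule rtrancl_trans)
  qed
  have b: "\<forall>e'\<in>induced F ?C. \<forall>a b. e' = {a,b} \<longrightarrow> (a,b) \<notin> (adj_rel (induced F ?C - {e'}))\<^sup>*"
  proof (intro ballI allI impI notI)
    fix e' a b assume h: "e' \<in> induced F ?C" "e' = {a,b}" "(a,b) \<in> (adj_rel (induced F ?C - {e'}))\<^sup>*"
    have "induced F ?C - {e'} \<subseteq> F - {{a,b}}" using h(2) by (auto simp: induced_def)
    then have 1: "(a,b) \<in> (adj_rel (F - {{a,b}}))\<^sup>*" using h(3) by (rule adj_rtr_mono)
    have "e' \<in> F" using h(1) by (simp add: induced_def)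
    then have "{a,b} \<in> F" using h(2) by simp
    from tree_bridge[OF T this] 1 show False by simp
  qed
  show ?thesis unfolding is_tree_def using wf c b by blast
qed

lemma comp_card: "card (induced F (tcomp F u v)) < card F"
proof -
  have "induced F (tcomp F u v) \<subseteq> F - {{u,v}}" using comp_v by (auto simp: induced_def)
  then have "induced F (tcomp F u v) \<subset> F" using e by blast
  then show ?thesis using wf_finite[OF wfT] by (simp add: psubset_card_mono)
qed

lemma comp_claim:
  assumes "(x,w) \<in> (adj_rel (induced F X))\<^sup>*" "x \<in> tcomp F u v"
  shows "(w \<in> tcomp F u v \<and> (x,w) \<in> (adj_rel (induced F (X \<inter> tcomp F u v)))\<^sup>*)
         \<or> (x,u) \<in> (adj_rel (induced F (X \<inter> tcomp F u v)))\<^sup>*"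
  using assms(1)
proof (induction rule: rtrancl_induct)
  case base then show ?case using assms(2) by simp
next
  case (step y z)
  let ?R = "adj_rel (induced F (X \<inter> tcomp F u v))"
  show ?case
  proof (cases "(x,u) \<in> ?R\<^sup>*")
    case True then show ?thesis by simp
  next
    case False
    then have y: "y \<in> tcomp F u v" "(x,y) \<in> ?R\<^sup>*" using step(3) by auto
    have yz: "{y,z} \<in> F" "y \<in> X" "z \<in> X" using step(2) by (auto simp: induced_def)
    show ?thesis
    proof (cases "{y,z} = {u,v}")
      case True
      then have "y = u" using y(1) comp_v by (auto simp: doubleton_eq_iff)
      then show ?thesis using y(2) by simp
    next
      case False
      then have "(y,z) \<in> adj_rel (F - {{u,v}})" using yz by simp
      moreover have "(u,y) \<in> (adj_rel (F - {{u,v}}))\<^sup>*" using y(1) by (simp add: tcomp_def)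
      ultimately have "(u,z) \<in> (adj_rel (F - {{u,v}}))\<^sup>*" by (meson rtrancl_into_rtrancl)
      then have z: "z \<in> tcomp F u v" by (simp add: tcomp_def)
      then have "(y,z) \<in> ?R" using y(1) yz by (auto simp: induced_def)
      then show ?thesis using y(2) z by (meson rtrancl.rtrancl_into_rtrancl)
    qed
  qed
qed

lemma comp_restrict:
  assumes "connected_graph X (induced F X)" "X \<inter> tcomp F u v \<noteq> {}"
  shows "connected_graph (X \<inter> tcomp F u v) (induced F (X \<inter> tcomp F u v))"
  unfolding conn_ind
proof (intro conjI ballI)
  show "X \<inter> tcomp F u v \<noteq> {}" by fact
next
  let ?R = "adj_rel (induced F (X \<inter> tcomp F u v))"
  fix a b assume a: "a \<in> X \<inter> tcomp F u v" and b: "b \<in> X \<inter> tcomp F u v"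
  have ab: "(a,b) \<in> (adj_rel (induced F X))\<^sup>*" "(b,a) \<in> (adj_rel (induced F X))\<^sup>*"
    using assms(1) a b unfolding conn_ind by auto
  have "a \<in> tcomp F u v" "b \<in> tcomp F u v" using a b by auto
  note c1 = comp_claim[OF ab(1) this(1)] and c2 = comp_claim[OF ab(2) this(2)]
  have 1: "(a,b) \<in> ?R\<^sup>* \<or> (a,u) \<in> ?R\<^sup>*" using c1 by blast
  have 2: "(b,a) \<in> ?R\<^sup>* \<or> (b,u) \<in> ?R\<^sup>*" using c2 by blast
  show "(a,b) \<in> ?R\<^sup>*"
  proof (cases "(a,b) \<in> ?R\<^sup>*")
    case True then show ?thesis .
  next
    case False
    then have au: "(a,u) \<in> ?R\<^sup>*" using 1 by blast
    show ?thesis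
    proof (cases "(b,a) \<in> ?R\<^sup>*")
      case True then show ?thesis by (rule adj_rtr_sym)
    next
      case False
      then have "(b,u) \<in> ?R\<^sup>*" using 2 by blast
      then have "(u,b) \<in> ?R\<^sup>*" by (rule adj_rtr_sym)
      with au show ?thesis by (rule rtrancl_trans)
    qed
  qed
qed

lemma comp_cross:
  assumes "connected_graph X (induced F X)" "x \<in> X \<inter> tcomp F u v" "y \<in> X - tcomp F u v"
  shows "u \<in> X"
proof -
  have "(x,y) \<in> (adj_rel (induced F X))\<^sup>*" using assms unfolding conn_ind by auto
  moreover have "x \<in> tcomp F u v" using assms(2) by simp
  ultimately have c: "(y \<in> tcomp F u v \<and> (x,y) \<in> (adj_rel (induced F (X \<inter> tcomp F u v)))\<^sup>*)
         \<or> (x,u) \<in> (adj_rel (induced F (X \<inter> tcomp F u v)))\<^sup>*" by (rule comp_claim)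
  have "y \<notin> tcomp F u v" using assms(3) by simp
  then have "(x,u) \<in> (adj_rel (induced F (X \<inter> tcomp F u v)))\<^sup>*" using c by blast
  then have "u \<in> X \<inter> tcomp F u v" using assms(2) by (rule adj_stay)
  then show ?thesis by simp
qed

end



lemma helly_reduce:
  fixes I :: "nat set" and F :: "nat set set"
  assumes T: "is_tree I F" and e: "{u,v} \<in> F"
    and sub: "\<forall>X\<in>\<X>. X \<subseteq> I \<and> connected_graph X (induced F X)"
    and pw: "\<forall>X\<in>\<X>. \<forall>Y\<in>\<X>. X \<inter> Y \<noteq> {}"
    and meet: "\<forall>X\<in>\<X>. X \<inter> tcomp F u v \<noteq> {}"
  shows "\<forall>Y\<in>(\<lambda>X. X \<inter> tcomp F u v) ` \<X>. Y \<subseteq> tcomp F u v \<and>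
            connected_graph Y (induced (induced F (tcomp F u v)) Y)"
    and "\<forall>X\<in>(\<lambda>X. X \<inter> tcomp F u v) ` \<X>. \<forall>Y\<in>(\<lambda>X. X \<inter> tcomp F u v) ` \<X>. X \<inter> Y \<noteq> {}"
proof -
  let ?C = "tcomp F u v"
  show "\<forall>Y\<in>(\<lambda>X. X \<inter> ?C) ` \<X>. Y \<subseteq> ?C \<and> connected_graph Y (induced (induced F ?C) Y)"
  proof
    fix Y assume "Y \<in> (\<lambda>X. X \<inter> ?C) ` \<X>"
    then obtain X where X: "X \<in> \<X>" "Y = X \<inter> ?C" by blast
    have "connected_graph X (induced F X)" using sub X(1) by blast
    moreover have "X \<inter> ?C \<noteq> {}" using meet X(1) by blast
    ultimately have "connected_graph (X \<inter> ?C) (induced F (X \<inter> ?C))"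
      by (rule comp_restrict[OF T e])
    moreover have "induced (induced F ?C) (X \<inter> ?C) = induced F (X \<inter> ?C)"
      by (rule induced_induced) blast
    ultimately show "Y \<subseteq> ?C \<and> connected_graph Y (induced (induced F ?C) Y)" using X(2) by simp
  qed
  have cross: "u \<in> X" if XX: "X \<in> \<X>" "\<not> X \<subseteq> ?C" for X
  proof -
    have "X \<inter> ?C \<noteq> {}" using meet XX(1) by simp
    then obtain x where x: "x \<in> X \<inter> ?C" by (meson ex_in_conv)
    obtain y where y: "y \<in> X - ?C" using XX(2) by (meson DiffI subsetI)
    have "connected_graph X (induced F X)" using sub XX(1) by blast
    then show "u \<in> X" using x y by (rule comp_cross[OF T e])
  qed
  show "\<forall>X\<in>(\<lambda>X. X \<inter> ?C) ` \<X>. \<forall>Y\<in>(\<lambda>X. X \<inter> ?C) ` \<X>. X \<inter> Y \<noteq> {}"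
  proof (intro ballI)
    fix X' Y' assume "X' \<in> (\<lambda>X. X \<inter> ?C) ` \<X>" "Y' \<in> (\<lambda>X. X \<inter> ?C) ` \<X>"
    then obtain X Y where XY: "X \<in> \<X>" "Y \<in> \<X>" "X' = X \<inter> ?C" "Y' = Y \<inter> ?C" by blast
    have ne: "X \<inter> Y \<noteq> {}" using pw XY by blast
    show "X' \<inter> Y' \<noteq> {}"
    proof (cases "X \<subseteq> ?C")
      case True
      then have "X' \<inter> Y' = X \<inter> Y" using XY(3,4) by blast
      then show ?thesis using ne by simp
    next
      case nX: False
      show ?thesis
      proof (cases "Y \<subseteq> ?C")
        case True
        then have "X' \<inter> Y' = X \<inter> Y" using XY(3,4) by blast
        then show ?thesis using ne by simp
      next
        case False
        have "u \<in> X" using cross[OF XY(1) nX] .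
        moreover have "u \<in> Y" using cross[OF XY(2) False] .
        moreover have "u \<in> tcomp F u v" by (rule comp_u[OF T e])
        ultimately have "u \<in> X' \<inter> Y'" using XY(3,4) by simp
        then show ?thesis by blast
      qed
    qed
  qed
qed



lemma helly:
  fixes I :: "nat set" and F :: "nat set set"
  assumes "is_tree I F" "\<X> \<noteq> {}" "\<forall>X\<in>\<X>. X \<subseteq> I \<and> connected_graph X (induced F X)"
    "\<forall>X\<in>\<X>. \<forall>Y\<in>\<X>. X \<inter> Y \<noteq> {}"
  shows "\<exists>i\<in>I. \<forall>X\<in>\<X>. i \<in> X"
  using assms
proof (induction "card F" arbitrary: I F \<X> rule: less_induct)
  case less
  note T = less.prems(1) and sub = less.prems(3) and pw = less.prems(4)
  have wfT: "wf_graph I F" using T by (simp add: is_tree_def)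
  show ?case
  proof (cases "F = {}")
    case True
    obtain X0 where X0: "X0 \<in> \<X>" using less.prems(2) by blast
    then have "X0 \<noteq> {}" using pw by blast
    then obtain x where x: "x \<in> X0" by blast
    have xI: "x \<in> I" using x X0 sub by blast
    have "\<forall>X\<in>\<X>. x \<in> X"
    proof
      fix X assume X: "X \<in> \<X>"
      then obtain y where y: "y \<in> X" using pw by blast
      then have "y \<in> I" using X sub by blast
      then have "(x,y) \<in> (adj_rel F)\<^sup>*" using tree_conn[OF T xI] by blast
      moreover have "adj_rel F = {}" using True by (simp add: adj_rel_def)
      ultimately have "x = y" by simp
      then show "x \<in> X" using y by simp
    qed
    then show ?thesis using xI by blast
  next
    case False
    then obtain e where eF: "e \<in> F" by blast
    have "\<forall>e\<in>F. \<exists>a b. e = {a,b} \<and> a \<noteq> b \<and> a \<in> I \<and> b \<in> I" using wfT by (simp add: wf_graph_def)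
    then obtain u v where "e = {u,v}" using eF by blast
    then have e: "{u,v} \<in> F" using eF by simp
    have e': "{v,u} \<in> F" using e by (simp add: insert_commute)
    have side: "\<exists>i\<in>I. \<forall>X\<in>\<X>. i \<in> X"
      if e1: "{a,b} \<in> F" and m: "\<forall>X\<in>\<X>. X \<inter> tcomp F a b \<noteq> {}" for a b
    proof -
      note r = helly_reduce[OF T e1 sub pw m]
      have "card (induced F (tcomp F a b)) < card F" by (rule comp_card[OF T e1])
      moreover have "is_tree (tcomp F a b) (induced F (tcomp F a b))" by (rule comp_tree[OF T e1])
      moreover have "(\<lambda>X. X \<inter> tcomp F a b) ` \<X> \<noteq> {}" using less.prems(2) by blast
      ultimately have "\<exists>i\<in>tcomp F a b. \<forall>Y\<in>(\<lambda>X. X \<inter> tcomp F a b) ` \<X>. i \<in> Y"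
        using r by (rule less.hyps)
      then obtain i where i: "i \<in> tcomp F a b" "\<forall>Y\<in>(\<lambda>X. X \<inter> tcomp F a b) ` \<X>. i \<in> Y"
        by blast
      have "i \<in> I" using i(1) comp_sub[OF T e1] by blast
      moreover have "\<forall>X\<in>\<X>. i \<in> X" using i(2) by blast
      ultimately show ?thesis by blast
    qed
    show ?thesis
    proof (cases "\<forall>X\<in>\<X>. X \<inter> tcomp F u v \<noteq> {}")
      case True then show ?thesis using side[OF e] by blast
    next
      case f1: False
      show ?thesis
      proof (cases "\<forall>X\<in>\<X>. X \<inter> tcomp F v u \<noteq> {}")
        case True then show ?thesis using side[OF e'] by blast
      next
        case False
        obtain X where X: "X \<in> \<X>" "X \<inter> tcomp F u v = {}" using f1 by blast
        obtain Y where Y: "Y \<in> \<X>" "Y \<inter> tcomp F v u = {}" using False by blast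
        have cov: "I \<subseteq> tcomp F u v \<union> tcomp F v u" by (rule comp_cover[OF T e])
        have "X \<subseteq> tcomp F v u" using X sub cov by blast
        moreover have "Y \<subseteq> tcomp F u v" using Y sub cov by blast
        ultimately have "X \<inter> Y \<subseteq> tcomp F u v \<inter> tcomp F v u" by blast
        then have "X \<inter> Y = {}" using comp_disj[OF T e] by blast
        then show ?thesis using pw X Y by blast
      qed
    qed
  qed
qed



lemma td_tree: "tree_decomposition V E I F B \<Longrightarrow> is_tree I F"
  by (simp add: tree_decomposition_def)lemma td_bag: "tree_decomposition V E I F B \<Longrightarrow> i \<in> I \<Longrightarrow> B i \<subseteq> V"
  by (simp add: tree_decomposition_def)lemma td_cover: "tree_decomposition V E I F B \<Longrightarrow> v \<in> V \<Longrightarrow> \<exists>i\<in>I. v \<in> B i"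
  by (simp add: tree_decomposition_def)lemma td_edge: "tree_decomposition V E I F B \<Longrightarrow> e \<in> E \<Longrightarrow> \<exists>i\<in>I. e \<subseteq> B i"
  by (simp add: tree_decomposition_def)lemma td_conn: "tree_decomposition V E I F B \<Longrightarrow> v \<in> V \<Longrightarrow>
   connected_graph {i\<in>I. v \<in> B i} (induced F {i\<in>I. v \<in> B i})"
  by (simp add: tree_decomposition_def)
lemma subtree_in:
  assumes td: "tree_decomposition V E I F B" and v: "v \<in> V"
    and U: "{i\<in>I. v \<in> B i} \<subseteq> U" and a: "a \<in> I" "v \<in> B a" and b: "b \<in> I" "v \<in> B b"
  shows "(a,b) \<in> (adj_rel (induced F U))\<^sup>*"
proof -
  have s: "induced F {i\<in>I. v \<in> B i} \<subseteq> induced F U" using U by (rule induced_mono)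
  have "\<forall>x\<in>{i\<in>I. v \<in> B i}. \<forall>y\<in>{i\<in>I. v \<in> B i}. (x,y) \<in> (adj_rel (induced F {i\<in>I. v \<in> B i}))\<^sup>*"
    using td_conn[OF td v] unfolding conn_ind by blast
  then have "(a,b) \<in> (adj_rel (induced F {i\<in>I. v \<in> B i}))\<^sup>*"
    using a b by blast
  then show ?thesis by (rule adj_rtr_mono[OF s])
qed


lemma td_H_conn:
  assumes td: "tree_decomposition V E I F B" and HV: "VH \<subseteq> V"
    and Hc: "connected_graph VH EH" and HE: "EH \<subseteq> E"
  shows "connected_graph {i\<in>I. B i \<inter> VH \<noteq> {}} (induced F {i\<in>I. B i \<inter> VH \<noteq> {}})"
  unfolding conn_ind
proof (intro conjI ballI)
  let ?U = "{i\<in>I. B i \<inter> VH \<noteq> {}}"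
  have sub: "{i\<in>I. w \<in> B i} \<subseteq> ?U" if "w \<in> VH" for w using that by blast
  obtain h where h: "h \<in> VH" using Hc by (auto simp: connected_graph_def)
  then obtain i where "i \<in> I" "h \<in> B i" using td_cover[OF td] HV by blast
  then show "?U \<noteq> {}" using h by blast
next
  let ?U = "{i\<in>I. B i \<inter> VH \<noteq> {}}"
  let ?R = "adj_rel (induced F ?U)"
  have sub: "{i\<in>I. w \<in> B i} \<subseteq> ?U" if "w \<in> VH" for w using that by blast
  fix i j assume i: "i \<in> ?U" and j: "j \<in> ?U"
  obtain h where h: "h \<in> B i" "h \<in> VH" using i by blast
  obtain h' where h': "h' \<in> B j" "h' \<in> VH" using j by blast
  have iI: "i \<in> I" using i by blast
  have "(h,h') \<in> (adj_rel {e\<in>EH. e \<subseteq> VH})\<^sup>*" using Hc h(2) h'(2) by (simp add: connected_graph_def)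
  then have "\<forall>j\<in>I. h' \<in> B j \<longrightarrow> (i,j) \<in> ?R\<^sup>*"
  proof (induction rule: rtrancl_induct)
    case base
    show ?case
    proof (intro ballI impI)
      fix j assume "j \<in> I" "h \<in> B j"
      show "(i,j) \<in> ?R\<^sup>*"
        by (rule subtree_in[OF td _ sub[OF h(2)] iI h(1)]) (use HV h(2) \<open>j \<in> I\<close> \<open>h \<in> B j\<close> in auto)
    qed
  next
    case (step y z)
    have yz: "{y,z} \<in> EH" "{y,z} \<subseteq> VH" using step(2) by auto
    then have "{y,z} \<in> E" using HE by blast
    then obtain k where k: "k \<in> I" "{y,z} \<subseteq> B k" using td_edge[OF td] by blast
    have ik: "(i,k) \<in> ?R\<^sup>*" using step(3) k by blast
    show ?case
    proof (intro ballI impI)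
      fix j assume "j \<in> I" "z \<in> B j"
      have zV: "z \<in> VH" using yz by blast
      have "(k,j) \<in> ?R\<^sup>*"
        by (rule subtree_in[OF td _ sub[OF zV] k(1)]) (use HV zV k \<open>j \<in> I\<close> \<open>z \<in> B j\<close> in auto)
      with ik show "(i,j) \<in> ?R\<^sup>*" by (rule rtrancl_trans)
    qed
  qed
  then show "(i,j) \<in> ?R\<^sup>*" using j h' by blast
qed


lemma td_subgraph:
  assumes tw: "tw_le V E k" and fin: "finite V" and V': "V' \<subseteq> V" and E': "\<forall>e\<in>E'. e \<in> E \<and> e \<subseteq> V'"
  shows "tw_le V' E' k"
proof -
  obtain I F B where td: "tree_decomposition V E I F B" and c: "\<forall>i\<in>I. card (B i) \<le> k + 1"
    using tw by (auto simp: tw_le_def)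
  let ?B = "\<lambda>i. B i \<inter> V'"
  have "tree_decomposition V' E' I F ?B"
    unfolding tree_decomposition_def
  proof (intro conjI ballI)
    show "is_tree I F" by (rule td_tree[OF td])
  next
    fix i assume "i \<in> I" then show "?B i \<subseteq> V'" by blast
  next
    fix v assume "v \<in> V'"
    then obtain i where "i \<in> I" "v \<in> B i" using td_cover[OF td] V' by blast
    then show "\<exists>i\<in>I. v \<in> ?B i" using \<open>v \<in> V'\<close> by blast
  next
    fix e assume "e \<in> E'"
    then have "e \<in> E" "e \<subseteq> V'" using E' by auto
    then obtain i where "i \<in> I" "e \<subseteq> B i" using td_edge[OF td] by blast
    then show "\<exists>i\<in>I. e \<subseteq> ?B i" using \<open>e \<subseteq> V'\<close> by blast
  next
    fix v assume v: "v \<in> V'"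
    have "{i\<in>I. v \<in> ?B i} = {i\<in>I. v \<in> B i}" using v by blast
    then show "connected_graph {i\<in>I. v \<in> ?B i} (induced F {i\<in>I. v \<in> ?B i})"
      using td_conn[OF td] v V' by auto
  qed
  moreover have "\<forall>i\<in>I. card (?B i) \<le> k + 1"
  proof
    fix i assume i: "i \<in> I"
    have "finite (B i)" using td_bag[OF td i] fin finite_subset by blast
    then have "card (?B i) \<le> card (B i)" by (simp add: card_mono)
    then show "card (?B i) \<le> k + 1" using c i by fastforce
  qed
  ultimately show ?thesis unfolding tw_le_def by blast
qed


lemma td_small_clique:
  assumes td: "tree_decomposition V E I F B" and KV: "K \<subseteq> V" and fin: "finite K" and c2: "card K \<le> 2"
    and adj: "\<forall>x\<in>K. \<forall>y\<in>K. x \<noteq> y \<longrightarrow> {x,y} \<in> E"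
  shows "\<exists>i\<in>I. K \<subseteq> B i"
proof (cases "K = {}")
  case True
  have "I \<noteq> {}" using td_tree[OF td] by (simp add: is_tree_def connected_graph_def)
  then show ?thesis using True by blast
next
  case False
  then obtain x where x: "x \<in> K" by blast
  show ?thesis
  proof (cases "K = {x}")
    case True
    then obtain i where "i \<in> I" "x \<in> B i" using td_cover[OF td] KV x by blast
    then show ?thesis using True by blast
  next
    case False
    then obtain y where y: "y \<in> K" "y \<noteq> x" using x by blast
    have "K = {x,y}"
    proof (rule ccontr)
      assume "K \<noteq> {x,y}"
      then obtain z where "z \<in> K" "z \<noteq> x" "z \<noteq> y" using x y by blast
      then have "{x,y,z} \<subseteq> K" using x y by blast
      then have "card {x,y,z} \<le> card K" using fin by (rule card_mono[rotated])
      moreover have "card {x,y,z} = 3" using \<open>z \<noteq> x\<close> \<open>z \<noteq> y\<close> y(2) by simp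
      ultimately show False using c2 by simp
    qed
    moreover have xy: "x \<noteq> y" using y(2) by simp
    have "{x,y} \<in> E" using adj[rule_format, OF x y(1) xy] .
    then obtain i where "i \<in> I" "{x,y} \<subseteq> B i" using td_edge[OF td] by blast
    ultimately show ?thesis by blast
  qed
qed




lemma three_elems:
  assumes "finite S" "2 < card S"
  shows "\<exists>a b c. a \<in> S \<and> b \<in> S \<and> c \<in> S \<and> a \<noteq> b \<and> a \<noteq> c \<and> b \<noteq> c"
proof -
  have "S \<noteq> {}" using assms by auto
  then obtain a where a: "a \<in> S" by blast
  have c1: "card (S - {a}) = card S - 1" using a assms(1) by simp
  then have "card (S - {a}) > 0" using assms(2) by simp
  then have "S - {a} \<noteq> {}" by (simp add: card_gt_0_iff)
  then obtain b where b: "b \<in> S - {a}" by blast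
  have "card (S - {a} - {b}) = card S - 2" using b c1 assms(1) by simp
  then have "card (S - {a} - {b}) > 0" using assms(2) by simp
  then have "S - {a} - {b} \<noteq> {}" by (simp add: card_gt_0_iff)
  then obtain c where c: "c \<in> S - {a} - {b}" by blast
  show ?thesis using a b c by blast
qed

lemma nbhd_sub: "nbhd V E VH \<subseteq> V - VH" by (auto simp: nbhd_def)
lemma cl_sub: "VH \<subseteq> V \<Longrightarrow> cl_nbhd V E VH \<subseteq> V" by (auto simp: cl_nbhd_def nbhd_def)

lemma nbhd_le2:
  assumes G: "wf_graph V E" and HV: "VH \<subseteq> V" and HE: "EH \<subseteq> E" and Hwf: "wf_graph VH EH"
    and Hc: "connected_graph VH EH"
    and tw: "tw_le (cl_nbhd V E VH)
                 (add_pairs (cl_nbhd V E VH) (induced E (cl_nbhd V E VH))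
                    (clique_edges (nbhd V E VH))) 2"
  shows "card (nbhd V E VH) \<le> 2"
proof (rule ccontr)
  let ?N = "nbhd V E VH" and ?Cl = "cl_nbhd V E VH"
  let ?E1 = "add_pairs ?Cl (induced E ?Cl) (clique_edges ?N)"
  assume "\<not> card ?N \<le> 2"
  then have c3: "2 < card ?N" by simp
  have finV: "finite V" using G by (simp add: wf_graph_def)
  have finN: "finite ?N" using nbhd_sub finV by (meson Diff_subset finite_subset)
  obtain a b c where abc: "a \<in> ?N" "b \<in> ?N" "c \<in> ?N" "a \<noteq> b" "a \<noteq> c" "b \<noteq> c"
    using three_elems[OF finN c3] by blast
  obtain I F B where td: "tree_decomposition ?Cl ?E1 I F B" and cB: "\<forall>i\<in>I. card (B i) \<le> 2 + 1"
    using tw by (auto simp: tw_le_def)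
  have NCl: "?N \<subseteq> ?Cl" and HCl: "VH \<subseteq> ?Cl" by (auto simp: cl_nbhd_def)
  have ClV: "?Cl \<subseteq> V" by (rule cl_sub[OF HV])
  have NH: "?N \<inter> VH = {}" using nbhd_sub[of V E VH] by blast
  let ?U = "{i\<in>I. B i \<inter> VH \<noteq> {}}"
  let ?T = "\<lambda>x. {i\<in>I. x \<in> B i}"
  have EH1: "EH \<subseteq> ?E1"
  proof
    fix e assume e: "e \<in> EH"
    have "e \<subseteq> VH" using Hwf e by (rule wf_edge)
    then show "e \<in> ?E1" using e HE HCl by (auto simp: add_pairs_def induced_def)
  qed
  have Uc: "connected_graph ?U (induced F ?U)" by (rule td_H_conn[OF td HCl Hc EH1])
  have Tc: "connected_graph (?T x) (induced F (?T x))" if "x \<in> ?N" for x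
    using td_conn[OF td] that NCl by blast
  have meetU: "?U \<inter> ?T x \<noteq> {}" if x: "x \<in> ?N" for x
  proof -
    obtain h where h: "h \<in> VH" "{h,x} \<in> E" using x by (auto simp: nbhd_def)
    have "{h,x} \<subseteq> ?Cl" using h(1) x HCl NCl by blast
    then have "{h,x} \<in> ?E1" using h(2) by (simp add: add_pairs_def induced_def)
    then obtain i where "i \<in> I" "{h,x} \<subseteq> B i" using td_edge[OF td] by blast
    then have "i \<in> ?U \<inter> ?T x" using h(1) by blast
    then show ?thesis by blast
  qed
  have meetT: "?T x \<inter> ?T y \<noteq> {}" if x: "x \<in> ?N" and y: "y \<in> ?N" for x y
  proof (cases "x = y")
    case True
    obtain i where "i \<in> I" "x \<in> B i" using td_cover[OF td] x NCl by blast
    then show ?thesis using True by blast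
  next
    case False
    have "{x,y} \<in> clique_edges ?N" using x y False by (auto simp: clique_edges_def)
    moreover have "{x,y} \<subseteq> ?Cl" using x y NCl by blast
    ultimately have "{x,y} \<in> ?E1" by (simp add: add_pairs_def)
    then obtain i where "i \<in> I" "{x,y} \<subseteq> B i" using td_edge[OF td] by blast
    then show ?thesis by blast
  qed
  have UU: "?U \<inter> ?U \<noteq> {}" using Uc by (simp add: connected_graph_def)
  let ?X = "insert ?U (?T ` {a,b,c})"
  have abcN: "{a,b,c} \<subseteq> ?N" using abc by blast
  have sub: "\<forall>X\<in>?X. X \<subseteq> I \<and> connected_graph X (induced F X)"
    using Uc Tc abcN by blast
  have pw: "\<forall>X\<in>?X. \<forall>Y\<in>?X. X \<inter> Y \<noteq> {}"
  proof (intro ballI)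
    fix X Y assume X: "X \<in> ?X" and Y: "Y \<in> ?X"
    show "X \<inter> Y \<noteq> {}"
    proof (cases "X = ?U")
      case XU: True
      show ?thesis
      proof (cases "Y = ?U")
        case True then show ?thesis using XU UU by simp
      next
        case False
        then obtain y where "y \<in> {a,b,c}" "Y = ?T y" using Y by blast
        then show ?thesis using XU meetU abcN by blast
      qed
    next
      case XnU: False
      then obtain x where x: "x \<in> {a,b,c}" "X = ?T x" using X by blast
      show ?thesis
      proof (cases "Y = ?U")
        case True
        have "?U \<inter> ?T x \<noteq> {}" using meetU x abcN by blast
        then show ?thesis using True x(2) by blast
      next
        case False
        then obtain y where "y \<in> {a,b,c}" "Y = ?T y" using Y by blast
        then show ?thesis using x meetT abcN by blast
      qed
    qed
  qed
  have "?X \<noteq> {}" by blast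
  then obtain i where i: "i \<in> I" "\<forall>X\<in>?X. i \<in> X" using helly[OF td_tree[OF td] _ sub pw] by blast
  have "?U \<in> ?X" by simp
  then have "i \<in> ?U" by (rule bspec[OF i(2)])
  then obtain h where h: "h \<in> B i" "h \<in> VH" by blast
  have "?T a \<in> ?X" by simp
  then have ia: "i \<in> ?T a" by (rule bspec[OF i(2)])
  have "?T b \<in> ?X" by simp
  then have ib: "i \<in> ?T b" by (rule bspec[OF i(2)])
  have "?T c \<in> ?X" by simp
  then have ic: "i \<in> ?T c" by (rule bspec[OF i(2)])
  from ia ib ic
  have "a \<in> B i" "b \<in> B i" "c \<in> B i" by simp_all
  then have sub4: "{h,a,b,c} \<subseteq> B i" using h by blast
  have "h \<noteq> a" "h \<noteq> b" "h \<noteq> c" using NH h(2) abc by blast+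
  then have "card {h,a,b,c} = 4" using abc by simp
  moreover have "finite (B i)" using td_bag[OF td i(1)] ClV finV by (meson finite_subset)
  ultimately have "4 \<le> card (B i)" using sub4 card_mono by metis
  then show False using cB i(1) by fastforce
qed



lemma conn_mono_edges:
  assumes "connected_graph X (induced F X)" "F \<subseteq> F'"
  shows "connected_graph X (induced F' X)"
proof -
  have s: "induced F X \<subseteq> induced F' X" using assms(2) by (auto simp: induced_def)
  show ?thesis using assms(1) unfolding conn_ind using adj_rtr_mono[OF s] by blast
qed

lemma conn_image:
  assumes "connected_graph X (induced F X)"
  shows "connected_graph (f ` X) (induced ((`) f ` F) (f ` X))"
  unfolding conn_ind
proof (intro conjI ballI)
  show "f ` X \<noteq> {}" using assms by (simp add: connected_graph_def)
next
  fix p q assume "p \<in> f ` X" "q \<in> f ` X"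
  then obtain x y where xy: "x \<in> X" "y \<in> X" "p = f x" "q = f y" by blast
  have "(x,y) \<in> (adj_rel (induced F X))\<^sup>*" using assms xy(1,2) unfolding conn_ind by blast
  then have "(f x, f y) \<in> (adj_rel (induced ((`) f ` F) (f ` X)))\<^sup>*"
  proof (rule adj_hom)
    fix a b assume "{a,b} \<in> induced F X"
    then have ab: "{a,b} \<in> F" "{a,b} \<subseteq> X" by (auto simp: induced_def)
    have "f ` {a,b} \<in> (`) f ` F" using ab(1) by (rule imageI)
    moreover have "f ` {a,b} \<subseteq> f ` X" using ab(2) by (rule image_mono)
    ultimately show "f a = f b \<or> {f a, f b} \<in> induced ((`) f ` F) (f ` X)" by (simp add: induced_def)
  qed
  then show "(p,q) \<in> (adj_rel (induced ((`) f ` F) (f ` X)))\<^sup>*" using xy by simp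
qed

lemma conn_edge:
  assumes "{a,b} \<in> F"
  shows "connected_graph {a,b} (induced F {a,b})"
  unfolding conn_ind
proof (intro conjI ballI)
  show "{a,b} \<noteq> {}" by simp
next
  have e: "{a,b} \<in> induced F {a,b}" using assms by (simp add: induced_def)
  then have ab: "(a,b) \<in> adj_rel (induced F {a,b})" by simp
  have ba: "(b,a) \<in> adj_rel (induced F {a,b})" using e by (simp add: insert_commute)
  fix x y assume "x \<in> {a,b}" "y \<in> {a,b}"
  then show "(x,y) \<in> (adj_rel (induced F {a,b}))\<^sup>*" using ab ba by auto
qed

lemma tree_rename:
  assumes T: "is_tree I F" and inj: "inj_on f I"
  shows "is_tree (f ` I) ((`) f ` F)"
proof -
  have wfT: "wf_graph I F" using T by (simp add: is_tree_def)
  have edges: "\<forall>e\<in>F. \<exists>a b. e = {a,b} \<and> a \<noteq> b \<and> a \<in> I \<and> b \<in> I" using wfT by (simp add: wf_graph_def)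
  have wf: "wf_graph (f ` I) ((`) f ` F)"
    unfolding wf_graph_def
  proof (intro conjI ballI)
    show "finite (f ` I)" using wfT by (simp add: wf_graph_def)
  next
    fix e' assume "e' \<in> (`) f ` F"
    then obtain e where e: "e \<in> F" "e' = f ` e" by blast
    then obtain a b where ab: "e = {a,b}" "a \<noteq> b" "a \<in> I" "b \<in> I" using edges by blast
    have "f a \<noteq> f b" using inj ab by (meson inj_on_contraD)
    then show "\<exists>u v. e' = {u, v} \<and> u \<noteq> v \<and> u \<in> f ` I \<and> v \<in> f ` I" using e ab by auto
  qed
  have c: "connected_graph (f ` I) ((`) f ` F)"
    unfolding connected_graph_def wf_self[OF wf]
  proof (intro conjI ballI)
    show "f ` I \<noteq> {}" using T by (simp add: is_tree_def connected_graph_def)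
  next
    fix p q assume "p \<in> f ` I" "q \<in> f ` I"
    then obtain x y where xy: "x \<in> I" "y \<in> I" "p = f x" "q = f y" by blast
    have "(x,y) \<in> (adj_rel F)\<^sup>*" using tree_conn[OF T xy(1,2)] .
    then have "(f x, f y) \<in> (adj_rel ((`) f ` F))\<^sup>*"
    proof (rule adj_hom)
      fix a b assume "{a,b} \<in> F"
      then have "f ` {a,b} \<in> (`) f ` F" by (rule imageI)
      then show "f a = f b \<or> {f a, f b} \<in> (`) f ` F" by simp
    qed
    then show "(p,q) \<in> (adj_rel ((`) f ` F))\<^sup>*" using xy by simp
  qed
  have b: "\<forall>e'\<in>(`) f ` F. \<forall>p q. e' = {p,q} \<longrightarrow> (p,q) \<notin> (adj_rel ((`) f ` F - {e'}))\<^sup>*"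
  proof (intro ballI allI impI notI)
    fix e' p q assume e': "e' \<in> (`) f ` F" "e' = {p,q}" and path: "(p,q) \<in> (adj_rel ((`) f ` F - {e'}))\<^sup>*"
    obtain e where e: "e \<in> F" "e' = f ` e" using e'(1) by blast
    then obtain a b where ab: "e = {a,b}" "a \<noteq> b" "a \<in> I" "b \<in> I" using edges by blast
    let ?g = "inv_into I f"
    have ga: "?g (f a) = a" "?g (f b) = b" using inj ab by (simp_all add: inv_into_f_f)
    have pq: "{p,q} = {f a, f b}" using e e'(2) ab by simp
    have fab: "f a \<noteq> f b" using inj ab by (meson inj_on_contraD)
    have "(?g p, ?g q) \<in> (adj_rel (F - {e}))\<^sup>*"
      using path
    proof (rule adj_hom)
      fix x y assume xy: "{x,y} \<in> (`) f ` F - {e'}"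
      then obtain d where d: "d \<in> F" "{x,y} = f ` d" by blast
      then obtain c1 c2 where cc: "d = {c1,c2}" "c1 \<in> I" "c2 \<in> I" using edges by blast
      have "d \<noteq> e" using xy d e by blast
      moreover have "{?g x, ?g y} = d"
      proof -
        have "{x,y} = {f c1, f c2}" using d cc by simp
        then have "{?g x, ?g y} = {?g (f c1), ?g (f c2)}" by (auto simp: doubleton_eq_iff)
        then show ?thesis using inj cc by (simp add: inv_into_f_f)
      qed
      ultimately show "?g x = ?g y \<or> {?g x, ?g y} \<in> F - {e}" using d by simp
    qed
    moreover have "(p = f a \<and> q = f b) \<or> (p = f b \<and> q = f a)" using pq fab by (auto simp: doubleton_eq_iff)
    ultimately have "(a,b) \<in> (adj_rel (F - {e}))\<^sup>* \<or> (b,a) \<in> (adj_rel (F - {e}))\<^sup>*" using ga by auto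
    then have "(a,b) \<in> (adj_rel (F - {e}))\<^sup>*"
    proof (elim disjE)
      assume "(b,a) \<in> (adj_rel (F - {e}))\<^sup>*" then show ?thesis by (rule adj_rtr_sym)
    qed
    then have 1: "(a,b) \<in> (adj_rel (F - {{a,b}}))\<^sup>*" using ab(1) by simp
    have "{a,b} \<in> F" using e ab by simp
    from tree_bridge[OF T this] 1 show False by simp
  qed
  show ?thesis unfolding is_tree_def using wf c b by blast
qed



lemma union_bridge1:
  fixes I1 I2 :: "nat set"
  assumes T1: "is_tree I1 F1" and T2: "is_tree I2 F2" and disj: "I1 \<inter> I2 = {}"
    and i1: "i1 \<in> I1" and i2: "i2 \<in> I2" and e': "e' \<in> F1" "e' = {p,q}"
  shows "(p,q) \<notin> (adj_rel (F1 \<union> F2 \<union> {{i1,i2}} - {e'}))\<^sup>*"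
proof
  assume path: "(p,q) \<in> (adj_rel (F1 \<union> F2 \<union> {{i1,i2}} - {e'}))\<^sup>*"
  have wf1: "wf_graph I1 F1" using T1 by (simp add: is_tree_def)
  have wf2: "wf_graph I2 F2" using T2 by (simp add: is_tree_def)
  have pq: "p \<in> I1" "q \<in> I1" using wf_edge[OF wf1 e'(1)] e'(2) by auto
  let ?pi = "\<lambda>x. if x \<in> I1 then x else i1"
  have "(?pi p, ?pi q) \<in> (adj_rel (F1 - {e'}))\<^sup>*"
    using path
  proof (rule adj_hom)
    fix x y assume xy: "{x,y} \<in> F1 \<union> F2 \<union> {{i1,i2}} - {e'}"
    show "?pi x = ?pi y \<or> {?pi x, ?pi y} \<in> F1 - {e'}"
    proof (cases "{x,y} \<in> F1")
      case True
      then have "x \<in> I1" "y \<in> I1" using wf_edge2[OF wf1] by blast+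
      then show ?thesis using True xy by simp
    next
      case False
      show ?thesis
      proof (cases "{x,y} \<in> F2")
        case True
        then have "x \<in> I2" "y \<in> I2" using wf_edge2[OF wf2] by blast+
        then have "x \<notin> I1" "y \<notin> I1" using disj by blast+
        then show ?thesis by simp
      next
        case f2: False
        then have "{x,y} = {i1,i2}" using xy False by blast
        then have "x \<in> {i1,i2}" "y \<in> {i1,i2}" by blast+
        moreover have "i2 \<notin> I1" using disj i2 by blast
        ultimately have "?pi x = i1" "?pi y = i1" using i1 by auto
        then show ?thesis by simp
      qed
    qed
  qed
  then have "(p,q) \<in> (adj_rel (F1 - {{p,q}}))\<^sup>*" using pq e'(2) by simp
  moreover have "{p,q} \<in> F1" using e' by simp
  ultimately show False using tree_bridge[OF T1] by blast
qed

lemma tree_union: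
  fixes I1 I2 :: "nat set"
  assumes T1: "is_tree I1 F1" and T2: "is_tree I2 F2" and disj: "I1 \<inter> I2 = {}"
    and i1: "i1 \<in> I1" and i2: "i2 \<in> I2"
  shows "is_tree (I1 \<union> I2) (F1 \<union> F2 \<union> {{i1,i2}})"
proof -
  let ?F = "F1 \<union> F2 \<union> {{i1,i2}}"
  have wf1: "wf_graph I1 F1" using T1 by (simp add: is_tree_def)
  have wf2: "wf_graph I2 F2" using T2 by (simp add: is_tree_def)
  have ne: "i1 \<noteq> i2" using disj i1 i2 by blast
  have wf: "wf_graph (I1 \<union> I2) ?F"
    unfolding wf_graph_def
  proof (intro conjI ballI)
    show "finite (I1 \<union> I2)" using wf1 wf2 by (simp add: wf_graph_def)
  next
    fix e assume e: "e \<in> ?F"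
    have h1: "\<forall>e\<in>F1. \<exists>a b. e = {a,b} \<and> a \<noteq> b \<and> a \<in> I1 \<and> b \<in> I1" using wf1 by (simp add: wf_graph_def)
    have h2: "\<forall>e\<in>F2. \<exists>a b. e = {a,b} \<and> a \<noteq> b \<and> a \<in> I2 \<and> b \<in> I2" using wf2 by (simp add: wf_graph_def)
    show "\<exists>u v. e = {u, v} \<and> u \<noteq> v \<and> u \<in> I1 \<union> I2 \<and> v \<in> I1 \<union> I2"
    proof (cases "e \<in> F1")
      case True then obtain a b where "e = {a,b}" "a \<noteq> b" "a \<in> I1" "b \<in> I1" using h1 by blast
      then show ?thesis by blast
    next
      case False
      show ?thesis
      proof (cases "e \<in> F2")
        case True then obtain a b where "e = {a,b}" "a \<noteq> b" "a \<in> I2" "b \<in> I2" using h2 by blast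
        then show ?thesis by blast
      next
        case f2: False
        then have "e = {i1,i2}" using e False by blast
        then show ?thesis using ne i1 i2 by blast
      qed
    qed
  qed
  let ?R = "adj_rel ?F"
  have r1: "(x,i1) \<in> ?R\<^sup>*" if "x \<in> I1" for x
  proof -
    have "(x,i1) \<in> (adj_rel F1)\<^sup>*" using tree_conn[OF T1 that i1] .
    then show ?thesis by (rule adj_rtr_mono[rotated]) blast
  qed
  have r2: "(i2,y) \<in> ?R\<^sup>*" if "y \<in> I2" for y
  proof -
    have "(i2,y) \<in> (adj_rel F2)\<^sup>*" using tree_conn[OF T2 i2 that] .
    then show ?thesis by (rule adj_rtr_mono[rotated]) blast
  qed
  have l: "(i1,i2) \<in> ?R" by simp
  have c12: "(x,y) \<in> ?R\<^sup>*" if "x \<in> I1" "y \<in> I2" for x y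
  proof -
    have "(x,i2) \<in> ?R\<^sup>*" using r1[OF that(1)] l by (rule rtrancl_into_rtrancl)
    then show ?thesis using r2[OF that(2)] by (rule rtrancl_trans)
  qed
  have c: "connected_graph (I1 \<union> I2) ?F"
    unfolding connected_graph_def wf_self[OF wf]
  proof (intro conjI ballI)
    show "I1 \<union> I2 \<noteq> {}" using i1 by blast
  next
    fix x y assume x: "x \<in> I1 \<union> I2" and y: "y \<in> I1 \<union> I2"
    show "(x,y) \<in> ?R\<^sup>*"
    proof (cases "x \<in> I1")
      case xI: True
      show ?thesis
      proof (cases "y \<in> I1")
        case True
        have "(x,y) \<in> (adj_rel F1)\<^sup>*" using tree_conn[OF T1 xI True] .
        then show ?thesis by (rule adj_rtr_mono[rotated]) blast
      next
        case False then have "y \<in> I2" using y by blast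
        then show ?thesis using c12 xI by blast
      qed
    next
      case xF: False
      then have xI: "x \<in> I2" using x by blast
      show ?thesis
      proof (cases "y \<in> I2")
        case True
        have "(x,y) \<in> (adj_rel F2)\<^sup>*" using tree_conn[OF T2 xI True] .
        then show ?thesis by (rule adj_rtr_mono[rotated]) blast
      next
        case False then have "y \<in> I1" using y by blast
        then have "(y,x) \<in> ?R\<^sup>*" using c12 xI by blast
        then show ?thesis by (rule adj_rtr_sym)
      qed
    qed
  qed
  have b: "\<forall>e\<in>?F. \<forall>p q. e = {p,q} \<longrightarrow> (p,q) \<notin> (adj_rel (?F - {e}))\<^sup>*"
  proof (intro ballI allI impI)
    fix e p q assume e: "e \<in> ?F" and epq: "e = {p,q}"
    show "(p,q) \<notin> (adj_rel (?F - {e}))\<^sup>*"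
    proof (cases "e \<in> F1")
      case True then show ?thesis using union_bridge1[OF T1 T2 disj i1 i2 True epq] by simp
    next
      case False
      show ?thesis
      proof (cases "e \<in> F2")
        case True
        have eqF: "?F = F2 \<union> F1 \<union> {{i2,i1}}" by (auto simp: insert_commute)
        have "I2 \<inter> I1 = {}" using disj by blast
        from union_bridge1[OF T2 T1 this i2 i1 True epq] show ?thesis using eqF by simp
      next
        case f2: False
        then have el: "e = {i1,i2}" using e False by blast
        let ?pi = "\<lambda>x. if x \<in> I1 then (0::nat) else 1"
        show ?thesis
        proof
          assume path: "(p,q) \<in> (adj_rel (?F - {e}))\<^sup>*"
          have "(?pi p, ?pi q) \<in> (adj_rel ({}::nat set set))\<^sup>*"
            using path
          proof (rule adj_hom)
            fix x y assume xy: "{x,y} \<in> ?F - {e}"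
            show "?pi x = ?pi y \<or> {?pi x, ?pi y} \<in> {}"
            proof (cases "{x,y} \<in> F1")
              case True
              then have "x \<in> I1" "y \<in> I1" using wf_edge2[OF wf1] by blast+
              then show ?thesis by simp
            next
              case False
              then have "{x,y} \<in> F2" using xy el by blast
              then have "x \<in> I2" "y \<in> I2" using wf_edge2[OF wf2] by blast+
              then have "x \<notin> I1" "y \<notin> I1" using disj by blast+
              then show ?thesis by simp
            qed
          qed
          then have "?pi p = ?pi q" by (simp add: adj_rel_def)
          moreover have "{p,q} = {i1,i2}" using el epq by simp
          moreover have "i2 \<notin> I1" using disj i2 by blast
          ultimately show False using i1 by (auto simp: doubleton_eq_iff split: if_splits)
        qed
      qed
    qed
  qed
  show ?thesis unfolding is_tree_def using wf c b by blast
qed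



lemma td_glue:
  fixes V1 V2 :: "'a set" and B1 B2 :: "nat \<Rightarrow> 'a set"
  assumes td1: "tree_decomposition V1 E1 I1 F1 B1" and c1: "\<forall>i\<in>I1. card (B1 i) \<le> k+1"
    and td2: "tree_decomposition V2 E2 I2 F2 B2" and c2: "\<forall>i\<in>I2. card (B2 i) \<le> k+1"
    and i1: "i1 \<in> I1" "V1 \<inter> V2 \<subseteq> B1 i1" and i2: "i2 \<in> I2" "V1 \<inter> V2 \<subseteq> B2 i2"
    and E: "\<forall>e\<in>E. e \<in> E1 \<or> e \<in> E2"
  shows "tw_le (V1 \<union> V2) E k"
proof -
  define f1 where "f1 = (\<lambda>i::nat. 2*i)"
  define f2 where "f2 = (\<lambda>i::nat. Suc (2*i))"
  define I where "I = f1 ` I1 \<union> f2 ` I2"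
  define F where "F = (`) f1 ` F1 \<union> (`) f2 ` F2 \<union> {{f1 i1, f2 i2}}"
  define B where "B = (\<lambda>n. if even n then B1 (n div 2) else B2 (n div 2))"
  have B1e: "B (f1 i) = B1 i" for i by (simp add: B_def f1_def)
  have B2e: "B (f2 i) = B2 i" for i by (simp add: B_def f2_def)
  have inj1: "inj_on f1 I1" by (simp add: f1_def inj_on_def)
  have inj2: "inj_on f2 I2" by (simp add: f2_def inj_on_def)
  have f12: "f1 a \<noteq> f2 b" for a b by (simp add: f1_def f2_def) presburger
  have disj: "f1 ` I1 \<inter> f2 ` I2 = {}" using f12 by blast
  have T: "is_tree I F"
    unfolding I_def F_def
    by (rule tree_union[OF tree_rename[OF td_tree[OF td1] inj1] tree_rename[OF td_tree[OF td2] inj2]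
          disj]) (use i1 i2 in blast)+
  have Isplit: "(\<exists>i\<in>I1. n = f1 i) \<or> (\<exists>i\<in>I2. n = f2 i)" if "n \<in> I" for n
    using that unfolding I_def by blast
  have FF: "(`) f1 ` F1 \<subseteq> F" "(`) f2 ` F2 \<subseteq> F" "{f1 i1, f2 i2} \<in> F" unfolding F_def by blast+
  have "tree_decomposition (V1 \<union> V2) E I F B"
    unfolding tree_decomposition_def
  proof (intro conjI ballI)
    show "is_tree I F" by (rule T)
  next
    fix n assume "n \<in> I"
    then show "B n \<subseteq> V1 \<union> V2" using Isplit B1e B2e td_bag[OF td1] td_bag[OF td2] by blast
  next
    fix v assume "v \<in> V1 \<union> V2"
    then show "\<exists>n\<in>I. v \<in> B n"
    proof
      assume "v \<in> V1"
      then obtain i where "i \<in> I1" "v \<in> B1 i" using td_cover[OF td1] by blast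
      then show ?thesis using B1e unfolding I_def by blast
    next
      assume "v \<in> V2"
      then obtain i where "i \<in> I2" "v \<in> B2 i" using td_cover[OF td2] by blast
      then show ?thesis using B2e unfolding I_def by blast
    qed
  next
    fix e assume "e \<in> E"
    then have "e \<in> E1 \<or> e \<in> E2" using E by blast
    then show "\<exists>n\<in>I. e \<subseteq> B n"
    proof
      assume "e \<in> E1"
      then obtain i where "i \<in> I1" "e \<subseteq> B1 i" using td_edge[OF td1] by blast
      then show ?thesis using B1e unfolding I_def by blast
    next
      assume "e \<in> E2"
      then obtain i where "i \<in> I2" "e \<subseteq> B2 i" using td_edge[OF td2] by blast
      then show ?thesis using B2e unfolding I_def by blast
    qed
  next
    fix v assume v: "v \<in> V1 \<union> V2"
    let ?T1 = "{i\<in>I1. v \<in> B1 i}" and ?T2 = "{i\<in>I2. v \<in> B2 i}"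
    have seteq: "{n\<in>I. v \<in> B n} = f1 ` ?T1 \<union> f2 ` ?T2"
    proof
      show "{n\<in>I. v \<in> B n} \<subseteq> f1 ` ?T1 \<union> f2 ` ?T2"
      proof
        fix n assume n: "n \<in> {n\<in>I. v \<in> B n}"
        then have "n \<in> I" "v \<in> B n" by auto
        then show "n \<in> f1 ` ?T1 \<union> f2 ` ?T2" using Isplit B1e B2e by blast
      qed
    next
      show "f1 ` ?T1 \<union> f2 ` ?T2 \<subseteq> {n\<in>I. v \<in> B n}"
        using B1e B2e unfolding I_def by blast
    qed
    have C1: "connected_graph (f1 ` ?T1) (induced F (f1 ` ?T1))" if "v \<in> V1"
    proof -
      have "connected_graph ?T1 (induced F1 ?T1)" using td_conn[OF td1 that] .
      then have "connected_graph (f1 ` ?T1) (induced ((`) f1 ` F1) (f1 ` ?T1))" by (rule conn_image)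
      then show ?thesis using FF(1) by (rule conn_mono_edges)
    qed
    have C2: "connected_graph (f2 ` ?T2) (induced F (f2 ` ?T2))" if "v \<in> V2"
    proof -
      have "connected_graph ?T2 (induced F2 ?T2)" using td_conn[OF td2 that] .
      then have "connected_graph (f2 ` ?T2) (induced ((`) f2 ` F2) (f2 ` ?T2))" by (rule conn_image)
      then show ?thesis using FF(2) by (rule conn_mono_edges)
    qed
    have E1: "?T1 = {}" if "v \<notin> V1" using that td_bag[OF td1] by blast
    have E2: "?T2 = {}" if "v \<notin> V2" using that td_bag[OF td2] by blast
    show "connected_graph {n\<in>I. v \<in> B n} (induced F {n\<in>I. v \<in> B n})"
      unfolding seteq
    proof (cases "v \<in> V1")
      case v1: True
      show "connected_graph (f1 ` ?T1 \<union> f2 ` ?T2) (induced F (f1 ` ?T1 \<union> f2 ` ?T2))"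
      proof (cases "v \<in> V2")
        case v2: True
        have a1: "f1 i1 \<in> f1 ` ?T1" using i1 v1 v2 by blast
        have a2: "f2 i2 \<in> f2 ` ?T2" using i2 v1 v2 by blast
        have L: "connected_graph {f1 i1, f2 i2} (induced F {f1 i1, f2 i2})" by (rule conn_edge[OF FF(3)])
        have "connected_graph (f1 ` ?T1 \<union> {f1 i1, f2 i2}) (induced F (f1 ` ?T1 \<union> {f1 i1, f2 i2}))"
          by (rule conn_union[OF C1[OF v1] L]) (use a1 in blast)
        then have "connected_graph ((f1 ` ?T1 \<union> {f1 i1, f2 i2}) \<union> f2 ` ?T2)
              (induced F ((f1 ` ?T1 \<union> {f1 i1, f2 i2}) \<union> f2 ` ?T2))"
          by (rule conn_union[OF _ C2[OF v2]]) (use a2 in blast)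
        moreover have "(f1 ` ?T1 \<union> {f1 i1, f2 i2}) \<union> f2 ` ?T2 = f1 ` ?T1 \<union> f2 ` ?T2"
          using a1 a2 by blast
        ultimately show ?thesis by simp
      next
        case False
        have e: "?T2 = {}" by (rule E2[OF False])
        show ?thesis using C1[OF v1] unfolding e by simp
      qed
    next
      case False
      then have v2: "v \<in> V2" using v by blast
      show "connected_graph (f1 ` ?T1 \<union> f2 ` ?T2) (induced F (f1 ` ?T1 \<union> f2 ` ?T2))"
        using C2[OF v2] unfolding E1[OF False] by simp
    qed
  qed
  moreover have "\<forall>n\<in>I. card (B n) \<le> k + 1"
  proof
    fix n assume "n \<in> I"
    then show "card (B n) \<le> k + 1" using Isplit B1e B2e c1 c2 by metis
  qed
  ultimately show ?thesis unfolding tw_le_def by blast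
qed



lemma td_contract:
  assumes td: "tree_decomposition W EW I F B" and c: "\<forall>i\<in>I. card (B i) \<le> k+1" and fin: "finite W"
    and HW: "VH \<subseteq> W" and Hc: "connected_graph VH EH" and HE: "EH \<subseteq> EW"
    and a: "a \<in> W" "a \<notin> VH" and h0: "h0 \<in> VH" "{h0,a} \<in> EW"
    and E': "\<forall>e\<in>E'. (e \<in> EW \<and> e \<inter> VH = {}) \<or> (\<exists>b h. e = {a,b} \<and> b \<notin> VH \<and> h \<in> VH \<and> {h,b} \<in> EW)"
  shows "tw_le (W - VH) E' k"
proof -
  define B' where "B' = (\<lambda>i. (B i - VH) \<union> (if B i \<inter> VH \<noteq> {} then {a} else {}))"
  have "tree_decomposition (W - VH) E' I F B'"
    unfolding tree_decomposition_def
  proof (intro conjI ballI)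
    show "is_tree I F" by (rule td_tree[OF td])
  next
    fix i assume "i \<in> I"
    then show "B' i \<subseteq> W - VH" using td_bag[OF td] a unfolding B'_def by auto
  next
    fix v assume v: "v \<in> W - VH"
    then obtain i where "i \<in> I" "v \<in> B i" using td_cover[OF td] by blast
    then show "\<exists>i\<in>I. v \<in> B' i" using v unfolding B'_def by blast
  next
    fix e assume "e \<in> E'"
    then have "(e \<in> EW \<and> e \<inter> VH = {}) \<or> (\<exists>b h. e = {a,b} \<and> b \<notin> VH \<and> h \<in> VH \<and> {h,b} \<in> EW)"
      using E' by blast
    then show "\<exists>i\<in>I. e \<subseteq> B' i"
    proof
      assume e: "e \<in> EW \<and> e \<inter> VH = {}"
      then obtain i where "i \<in> I" "e \<subseteq> B i" using td_edge[OF td] by blast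
      then show ?thesis using e unfolding B'_def by blast
    next
      assume "\<exists>b h. e = {a,b} \<and> b \<notin> VH \<and> h \<in> VH \<and> {h,b} \<in> EW"
      then obtain b h where bh: "e = {a,b}" "b \<notin> VH" "h \<in> VH" "{h,b} \<in> EW" by blast
      then obtain i where i: "i \<in> I" "{h,b} \<subseteq> B i" using td_edge[OF td] by blast
      then have "B i \<inter> VH \<noteq> {}" using bh by blast
      then have "a \<in> B' i" unfolding B'_def by simp
      moreover have "b \<in> B' i" using i bh unfolding B'_def by blast
      ultimately show ?thesis using i bh by blast
    qed
  next
    fix v assume v: "v \<in> W - VH"
    show "connected_graph {i\<in>I. v \<in> B' i} (induced F {i\<in>I. v \<in> B' i})"
    proof (cases "v = a")
      case True
      have eq: "{i\<in>I. v \<in> B' i} = {i\<in>I. a \<in> B i} \<union> {i\<in>I. B i \<inter> VH \<noteq> {}}"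
        using True a unfolding B'_def by auto
      have c1: "connected_graph {i\<in>I. a \<in> B i} (induced F {i\<in>I. a \<in> B i})" using td_conn[OF td a(1)] .
      have c2: "connected_graph {i\<in>I. B i \<inter> VH \<noteq> {}} (induced F {i\<in>I. B i \<inter> VH \<noteq> {}})"
        by (rule td_H_conn[OF td HW Hc HE])
      obtain i where "i \<in> I" "{h0,a} \<subseteq> B i" using td_edge[OF td h0(2)] by blast
      then have "i \<in> {i\<in>I. a \<in> B i} \<inter> {i\<in>I. B i \<inter> VH \<noteq> {}}" using h0(1) by blast
      then have "{i\<in>I. a \<in> B i} \<inter> {i\<in>I. B i \<inter> VH \<noteq> {}} \<noteq> {}" by blast
      then show ?thesis unfolding eq by (rule conn_union[OF c1 c2])
    next
      case False
      have eq: "{i\<in>I. v \<in> B' i} = {i\<in>I. v \<in> B i}" using False v unfolding B'_def by auto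
      show ?thesis unfolding eq using td_conn[OF td] v by blast
    qed
  qed
  moreover have "\<forall>i\<in>I. card (B' i) \<le> k + 1"
  proof
    fix i assume i: "i \<in> I"
    have finB: "finite (B i)" using td_bag[OF td i] fin by (meson finite_subset)
    have "card (B' i) \<le> card (B i)"
    proof (cases "B i \<inter> VH = {}")
      case True
      then have "B' i = B i - VH" unfolding B'_def by simp
      then show ?thesis using finB by (simp add: card_mono)
    next
      case False
      then have "B' i = insert a (B i - VH)" unfolding B'_def by simp
      moreover have "card (insert a (B i - VH)) \<le> Suc (card (B i - VH))" using finB by (simp add: card_insert_if)
      moreover have "card (B i - VH) < card (B i)"
      proof -
        have "B i - VH \<subset> B i" using False by blast
        then show ?thesis using finB by (rule psubset_card_mono[rotated])
      qed
      ultimately show ?thesis by simp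
    qed
    then show "card (B' i) \<le> k + 1" using c i by fastforce
  qed
  ultimately show ?thesis unfolding tw_le_def by blast
qed



lemma N_pair:
  assumes "finite N" "card N \<le> 2" "a \<in> N" "b \<in> N" "a \<noteq> b" "x \<in> N"
  shows "x = a \<or> x = b"
proof (rule ccontr)
  assume "\<not> (x = a \<or> x = b)"
  then have "card {a,b,x} = 3" using assms(5) by auto
  moreover have "card {a,b,x} \<le> card N" using assms by (intro card_mono) auto
  ultimately show False using assms(2) by simp
qed

lemma dir1:
  fixes V :: "'a set" and E :: "'a set set"
  assumes G: "wf_graph V E"
    and HV: "VH \<subseteq> V" and HE: "EH \<subseteq> E" and Hwf: "wf_graph VH EH"
    and Hc: "connected_graph VH EH"
    and N2: "card (nbhd V E VH) \<le> 2"
    and sol: "has_solution V E t"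
  shows "has_solution (V - VH) (induced E (V - VH) \<union> clique_edges (nbhd V E VH)) t"
proof -
  let ?N = "nbhd V E VH"
  let ?E' = "induced E (V - VH) \<union> clique_edges ?N"
  obtain S where S: "S \<subseteq> V" "card S \<le> t" "tw_le (V - S) (induced E (V - S)) 2"
    using sol by (auto simp: has_solution_def is_solution_def)
  have finV: "finite V" using G by (simp add: wf_graph_def)
  have finN: "finite ?N" using nbhd_sub[of V E VH] finV by (meson Diff_subset finite_subset)
  have NV: "?N \<subseteq> V - VH" by (rule nbhd_sub)
  have finS: "finite S" using S(1) finV by (meson finite_subset)
  have cliq: "\<exists>x y. e = {x,y} \<and> x \<noteq> y \<and> x \<in> ?N \<and> y \<in> ?N" if "e \<in> clique_edges ?N" for e
    using that by (auto simp: clique_edges_def)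
  have subcase: "has_solution (V - VH) ?E' t"
    if S': "S' \<subseteq> V - VH" "card S' \<le> t" "V - VH - S' \<subseteq> V - S"
      and noc: "\<And>x y. x \<in> ?N - S' \<Longrightarrow> y \<in> ?N - S' \<Longrightarrow> x = y" for S'
  proof -
    have "tw_le (V - VH - S') (induced ?E' (V - VH - S')) 2"
    proof (rule td_subgraph[OF S(3)])
      show "finite (V - S)" using finV by simp
      show "V - VH - S' \<subseteq> V - S" by (rule S'(3))
      show "\<forall>e\<in>induced ?E' (V - VH - S'). e \<in> induced E (V - S) \<and> e \<subseteq> V - VH - S'"
      proof
        fix e assume e: "e \<in> induced ?E' (V - VH - S')"
        then have es: "e \<subseteq> V - VH - S'" and eE': "e \<in> ?E'" by (auto simp: induced_def)
        have "e \<notin> clique_edges ?N"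
        proof
          assume "e \<in> clique_edges ?N"
          then obtain x y where "e = {x,y}" "x \<noteq> y" "x \<in> ?N" "y \<in> ?N" using cliq by blast
          then show False using noc es by blast
        qed
        then have "e \<in> E" using eE' by (auto simp: induced_def)
        then show "e \<in> induced E (V - S) \<and> e \<subseteq> V - VH - S'" using es S'(3) by (auto simp: induced_def)
      qed
    qed
    then show ?thesis using S' unfolding has_solution_def is_solution_def
      by (metis Diff_subset subset_trans)
  qed
  show ?thesis
  proof (cases "\<exists>a b. a \<noteq> b \<and> a \<in> ?N - S \<and> b \<in> ?N - S")
    case False
    show ?thesis
    proof (rule subcase[of "S - VH"])
      show "S - VH \<subseteq> V - VH" using S(1) by blast
      have "card (S - VH) \<le> card S" using finS by (simp add: card_mono)
      then show "card (S - VH) \<le> t" using S(2) by simp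
      show "V - VH - (S - VH) \<subseteq> V - S" by blast
      fix x y assume "x \<in> ?N - (S - VH)" "y \<in> ?N - (S - VH)"
      then have "x \<in> ?N - S" "y \<in> ?N - S" using NV by auto
      then show "x = y" using False by blast
    qed
  next
    case True
    then obtain a b where ab: "a \<noteq> b" "a \<in> ?N - S" "b \<in> ?N - S" by blast
    have Nab: "x = a \<or> x = b" if "x \<in> ?N" for x
      using N_pair[OF finN N2, of a b x] ab that by blast
    show ?thesis
    proof (cases "S \<inter> VH = {}")
      case False
      show ?thesis
      proof (rule subcase[of "insert a (S - VH)"])
        show "insert a (S - VH) \<subseteq> V - VH" using S(1) ab NV by blast
        have "card (insert a (S - VH)) \<le> Suc (card (S - VH))" using finS by (simp add: card_insert_if)
        moreover have "card (S - VH) < card S"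
        proof -
          have "S - VH \<subset> S" using False by blast
          then show ?thesis using finS by (rule psubset_card_mono[rotated])
        qed
        ultimately show "card (insert a (S - VH)) \<le> t" using S(2) by simp
        show "V - VH - insert a (S - VH) \<subseteq> V - S" by blast
        fix x y assume "x \<in> ?N - insert a (S - VH)" "y \<in> ?N - insert a (S - VH)"
        then have "x = b" "y = b" using Nab by blast+
        then show "x = y" by simp
      qed
    next
      case True
      have HS: "VH \<subseteq> V - S" using HV True by blast
      obtain h0 where h0: "h0 \<in> VH" "{h0,a} \<in> E" using ab by (auto simp: nbhd_def)
      have "h0 \<in> V - S" using HS h0 by blast
      then have h0E: "{h0,a} \<in> induced E (V - S)" using h0 ab NV by (auto simp: induced_def)
      have HE': "EH \<subseteq> induced E (V - S)"
      proof
        fix e assume e: "e \<in> EH"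
        have "e \<subseteq> VH" using Hwf e by (rule wf_edge)
        then show "e \<in> induced E (V - S)" using e HE HS by (auto simp: induced_def)
      qed
      have aW: "a \<in> V - S" "a \<notin> VH" using ab NV by auto
      obtain I F B where td: "tree_decomposition (V - S) (induced E (V - S)) I F B"
        and cB: "\<forall>i\<in>I. card (B i) \<le> 2 + 1" using S(3) by (auto simp: tw_le_def)
      have "tw_le (V - S - VH) (induced ?E' (V - VH - S)) 2"
      proof (rule td_contract[OF td cB _ HS Hc HE' aW h0(1) h0E])
        show "finite (V - S)" using finV by simp
        show "\<forall>e\<in>induced ?E' (V - VH - S). (e \<in> induced E (V - S) \<and> e \<inter> VH = {}) \<or>
          (\<exists>b h. e = {a, b} \<and> b \<notin> VH \<and> h \<in> VH \<and> {h, b} \<in> induced E (V - S))"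
        proof
          fix e assume e: "e \<in> induced ?E' (V - VH - S)"
          then have es: "e \<subseteq> V - VH - S" and eE': "e \<in> ?E'" by (auto simp: induced_def)
          show "(e \<in> induced E (V - S) \<and> e \<inter> VH = {}) \<or>
            (\<exists>b h. e = {a, b} \<and> b \<notin> VH \<and> h \<in> VH \<and> {h, b} \<in> induced E (V - S))"
          proof (cases "e \<in> clique_edges ?N")
            case False
            then have "e \<in> E" using eE' by (auto simp: induced_def)
            then show ?thesis using es by (auto simp: induced_def)
          next
            case True
            then obtain x y where xy: "e = {x,y}" "x \<noteq> y" "x \<in> ?N" "y \<in> ?N" using cliq by blast
            then have "e = {a,b}" using Nab[OF xy(3)] Nab[OF xy(4)] by auto
            moreover obtain h where h: "h \<in> VH" "{h,b} \<in> E" using ab by (auto simp: nbhd_def)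
            moreover have "{h,b} \<in> induced E (V - S)" using h HS ab NV by (auto simp: induced_def)
            moreover have "b \<notin> VH" using ab NV by blast
            ultimately show ?thesis by blast
          qed
        qed
      qed
      moreover have "V - S - VH = V - VH - S" by blast
      ultimately have tw': "tw_le (V - VH - S) (induced ?E' (V - VH - S)) 2" by simp
      have "S \<subseteq> V - VH" using S(1) True by blast
      then show ?thesis using tw' S(2) unfolding has_solution_def is_solution_def by blast
    qed
  qed
qed



lemma dir2:
  fixes V :: "'a set" and E :: "'a set set"
  assumes G: "wf_graph V E"
    and HV: "VH \<subseteq> V"
    and N2: "card (nbhd V E VH) \<le> 2"
    and tw_H: "tw_le (cl_nbhd V E VH)
                 (add_pairs (cl_nbhd V E VH) (induced E (cl_nbhd V E VH))
                    (clique_edges (nbhd V E VH))) 2"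
    and sol: "has_solution (V - VH) (induced E (V - VH) \<union> clique_edges (nbhd V E VH)) t"
  shows "has_solution V E t"
proof -
  let ?N = "nbhd V E VH" and ?Cl = "cl_nbhd V E VH"
  let ?E' = "induced E (V - VH) \<union> clique_edges ?N"
  let ?E1 = "add_pairs ?Cl (induced E ?Cl) (clique_edges ?N)"
  obtain S where S: "S \<subseteq> V - VH" "card S \<le> t" "tw_le (V - VH - S) (induced ?E' (V - VH - S)) 2"
    using sol by (auto simp: has_solution_def is_solution_def)
  have finV: "finite V" using G by (simp add: wf_graph_def)
  have NV: "?N \<subseteq> V - VH" by (rule nbhd_sub)
  have ClV: "?Cl \<subseteq> V" by (rule cl_sub[OF HV])
  have finN: "finite ?N" using NV finV by (meson Diff_subset finite_subset)
  have HCl: "VH \<subseteq> ?Cl" and NCl: "?N \<subseteq> ?Cl" by (auto simp: cl_nbhd_def)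
  let ?V1 = "?Cl - S" and ?V2 = "V - VH - S"
  have tw1: "tw_le ?V1 (induced ?E1 ?V1) 2"
    by (rule td_subgraph[OF tw_H]) (use finV ClV finite_subset in \<open>auto simp: induced_def\<close>)
  obtain I1 F1 B1 where td1: "tree_decomposition ?V1 (induced ?E1 ?V1) I1 F1 B1"
    and c1: "\<forall>i\<in>I1. card (B1 i) \<le> 2 + 1" using tw1 by (auto simp: tw_le_def)
  obtain I2 F2 B2 where td2: "tree_decomposition ?V2 (induced ?E' ?V2) I2 F2 B2"
    and c2: "\<forall>i\<in>I2. card (B2 i) \<le> 2 + 1" using S(3) by (auto simp: tw_le_def)
  have inter: "?V1 \<inter> ?V2 = ?N - S"
  proof
    show "?V1 \<inter> ?V2 \<subseteq> ?N - S" by (auto simp: cl_nbhd_def)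
    show "?N - S \<subseteq> ?V1 \<inter> ?V2" using NV NCl by blast
  qed
  have finK: "finite (?N - S)" using finN by simp
  have cK: "card (?N - S) \<le> 2" using N2 card_mono[OF finN, of "?N - S"] by simp
  have cl: "{x,y} \<in> clique_edges ?N" if "x \<in> ?N" "y \<in> ?N" "x \<noteq> y" for x y
    using that by (auto simp: clique_edges_def)
  obtain i1 where i1: "i1 \<in> I1" "?N - S \<subseteq> B1 i1"
  proof -
    have "\<exists>i\<in>I1. ?N - S \<subseteq> B1 i"
    proof (rule td_small_clique[OF td1 _ finK cK])
      show "?N - S \<subseteq> ?V1" using NCl by blast
      show "\<forall>x\<in>?N - S. \<forall>y\<in>?N - S. x \<noteq> y \<longrightarrow> {x, y} \<in> induced ?E1 ?V1"
      proof (intro ballI impI)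
        fix x y assume "x \<in> ?N - S" "y \<in> ?N - S" "x \<noteq> y"
        then show "{x, y} \<in> induced ?E1 ?V1"
          using cl[of x y] NCl by (auto simp: induced_def add_pairs_def)
      qed
    qed
    then show ?thesis using that by blast
  qed
  obtain i2 where i2: "i2 \<in> I2" "?N - S \<subseteq> B2 i2"
  proof -
    have "\<exists>i\<in>I2. ?N - S \<subseteq> B2 i"
    proof (rule td_small_clique[OF td2 _ finK cK])
      show "?N - S \<subseteq> ?V2" using NV by blast
      show "\<forall>x\<in>?N - S. \<forall>y\<in>?N - S. x \<noteq> y \<longrightarrow> {x, y} \<in> induced ?E' ?V2"
      proof (intro ballI impI)
        fix x y assume "x \<in> ?N - S" "y \<in> ?N - S" "x \<noteq> y"
        then show "{x, y} \<in> induced ?E' ?V2"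
          using cl[of x y] NV by (auto simp: induced_def)
      qed
    qed
    then show ?thesis using that by blast
  qed
  have Eok: "\<forall>e\<in>induced E (V - S). e \<in> induced ?E1 ?V1 \<or> e \<in> induced ?E' ?V2"
  proof
    fix e assume e: "e \<in> induced E (V - S)"
    then have eE: "e \<in> E" and es: "e \<subseteq> V - S" by (auto simp: induced_def)
    obtain x y where xy: "e = {x,y}" using G eE unfolding wf_graph_def by blast
    show "e \<in> induced ?E1 ?V1 \<or> e \<in> induced ?E' ?V2"
    proof (cases "e \<inter> VH = {}")
      case True
      then have "e \<in> induced ?E' ?V2" using eE es by (auto simp: induced_def)
      then show ?thesis by blast
    next
      case False
      have "e \<subseteq> ?Cl"
      proof -
        have "x \<in> VH \<or> y \<in> VH" using False xy by blast
        moreover have "x \<in> V" "y \<in> V" using es xy by auto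
        ultimately have "x \<in> ?Cl" "y \<in> ?Cl" using eE xy
          by (auto simp: cl_nbhd_def nbhd_def insert_commute)
        then show ?thesis using xy by blast
      qed
      then have "e \<in> induced ?E1 ?V1" using eE es by (auto simp: induced_def add_pairs_def)
      then show ?thesis by blast
    qed
  qed
  have "tw_le (?V1 \<union> ?V2) (induced E (V - S)) 2"
    by (rule td_glue[OF td1 c1 td2 c2 i1(1) _ i2(1) _ Eok]) (use inter i1 i2 in auto)
  moreover have "?V1 \<union> ?V2 = V - S" using ClV HCl by blast
  ultimately have "tw_le (V - S) (induced E (V - S)) 2" by simp
  then show ?thesis using S(1,2) unfolding has_solution_def is_solution_def by blast
qed

theorem mainTheorem3:
  fixes V :: "'a set" and E :: "'a set set" and t :: nat
    and VH :: "'a set" and EH :: "'a set set"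
  assumes G: "wf_graph V E"
    and H_sub: "VH \<subseteq> V" "EH \<subseteq> E" "wf_graph VH EH"
    and H_conn: "connected_graph VH EH"
    and tw_H: "tw_le (cl_nbhd V E VH)
                 (add_pairs (cl_nbhd V E VH) (induced E (cl_nbhd V E VH))
                    (clique_edges (nbhd V E VH))) 2"
  shows "has_solution V E t \<longleftrightarrow>
         has_solution (V - VH) (induced E (V - VH) \<union> clique_edges (nbhd V E VH)) t"
proof -
  have N2: "card (nbhd V E VH) \<le> 2" by (rule nbhd_le2[OF G H_sub H_conn tw_H])
  show ?thesis
    using dir1[OF G H_sub H_conn N2] dir2[OF G H_sub(1) N2 tw_H] by blast
qed


end
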